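(* The class of all bounded lattices with a unary operation $'$, $(L,\vee,\wedge,{}',0,1)$, in which the Sasaki operations form an adjoint pair coincides with the class of bounded lattices with complementation satisfying the identities $x\vee y'\approx y'\vee\big((x\vee y')\wedge y\big)$ and $x\wedge y\approx x\wedge\big((x\wedge y)\vee x'\big)$; in particular it is a variety.
   Context: A complementation is a unary operation $'$ with $x\vee x'\approx1$ and $x\wedge x'\approx0$. The Sasaki operations are $x\odot y=(x\vee y')\wedge y$ and $x\to y=x'\vee(x\wedge y)$; they form an adjoint pair if for all $x,y,z$: $x\odot y\le z$ iff $x\le y\to z$. *)

theory Defs
  imports Main
begin

definition complementation :: "('a::bounded_lattice \<Rightarrow> 'a) \<Rightarrow> bool" where
  "complementation c \<longleftrightarrow> (\<forall>x. sup x (c x) = top \<and> inf x (c x) = bot)"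

definition sasaki_prod :: "('a::bounded_lattice \<Rightarrow> 'a) \<Rightarrow> 'a \<Rightarrow> 'a \<Rightarrow> 'a" where
  "sasaki_prod c x y = inf (sup x (c y)) y"

definition sasaki_impl :: "('a::bounded_lattice \<Rightarrow> 'a) \<Rightarrow> 'a \<Rightarrow> 'a \<Rightarrow> 'a" where
  "sasaki_impl c x y = sup (c x) (inf x y)"

definition adjoint_pair :: "('a::bounded_lattice \<Rightarrow> 'a) \<Rightarrow> bool" where
  "adjoint_pair c \<longleftrightarrow>
     (\<forall>x y z. sasaki_prod c x y \<le> z \<longleftrightarrow> x \<le> sasaki_impl c y z)"

end

theory Submission
  imports Defs
begin

theorem mainTheorem3:
  fixes c :: "'a::bounded_lattice \<Rightarrow> 'a"
  shows "adjoint_pair c \<longleftrightarrow>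
           (complementation c \<and>
            (\<forall>x y. sup x (c y) = sup (c y) (inf (sup x (c y)) y)) \<and>
            (\<forall>x y. inf x y = inf x (sup (inf x y) (c x))))"
proof
  assume A: "adjoint_pair c"
  have adj: "\<And>x y z. inf (sup x (c y)) y \<le> z \<longleftrightarrow> x \<le> sup (c y) (inf y z)"
    using A unfolding adjoint_pair_def sasaki_prod_def sasaki_impl_def by blast
  have comp: "complementation c"
    unfolding complementation_def
  proof
    fix y
    have "inf (sup top (c y)) y \<le> y" by simp
    hence "top \<le> sup (c y) (inf y y)" using adj by blast
    hence 1: "sup y (c y) = top" by (simp add: sup_commute top_unique)
    have "c y \<le> sup (c y) (inf y bot)" by simp
    hence "inf (sup (c y) (c y)) y \<le> bot" using adj by blast
    hence "inf y (c y) = bot" by (simp add: inf_commute bot_unique)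
    with 1 show "sup y (c y) = top \<and> inf y (c y) = bot" by simp
  qed
  have id1: "\<forall>x y. sup x (c y) = sup (c y) (inf (sup x (c y)) y)"
  proof (intro allI antisym)
    fix x y
    have "x \<le> sup (c y) (inf y (inf (sup x (c y)) y))"
      using adj[of x y "inf (sup x (c y)) y"] by simp
    hence "x \<le> sup (c y) (inf (sup x (c y)) y)"
      by (simp add: inf_commute inf_left_commute)
    thus "sup x (c y) \<le> sup (c y) (inf (sup x (c y)) y)" by simp
    show "sup (c y) (inf (sup x (c y)) y) \<le> sup x (c y)"
      by (simp add: le_infI1)
  qed
  have id2: "\<forall>x y. inf x y = inf x (sup (inf x y) (c x))"
  proof (intro allI antisym)
    fix x y
    show "inf x y \<le> inf x (sup (inf x y) (c x))" by simp
    have "inf (sup (sup (c x) (inf x y)) (c x)) x \<le> y"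
      using adj[of "sup (c x) (inf x y)" x y] by simp
    moreover have "sup (sup (c x) (inf x y)) (c x) = sup (inf x y) (c x)"
      by (simp add: sup_commute sup_left_commute)
    ultimately have "inf (sup (inf x y) (c x)) x \<le> y" by simp
    thus "inf x (sup (inf x y) (c x)) \<le> inf x y"
      by (simp add: inf_commute)
  qed
  show "complementation c \<and>
            (\<forall>x y. sup x (c y) = sup (c y) (inf (sup x (c y)) y)) \<and>
            (\<forall>x y. inf x y = inf x (sup (inf x y) (c x)))"
    using comp id1 id2 by blast
next
  assume H: "complementation c \<and>
            (\<forall>x y. sup x (c y) = sup (c y) (inf (sup x (c y)) y)) \<and>
            (\<forall>x y. inf x y = inf x (sup (inf x y) (c x)))"
  hence i1: "\<And>x y. sup x (c y) = sup (c y) (inf (sup x (c y)) y)"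
    and i2: "\<And>x y. inf x y = inf x (sup (inf x y) (c x))" by blast+
  show "adjoint_pair c"
    unfolding adjoint_pair_def sasaki_prod_def sasaki_impl_def
  proof (intro allI iffI)
    fix x y z
    assume a: "inf (sup x (c y)) y \<le> z"
    have "x \<le> sup x (c y)" by simp
    also have "\<dots> = sup (c y) (inf (sup x (c y)) y)" by (rule i1)
    also have "\<dots> \<le> sup (c y) (inf y z)" using a
      by (meson inf_le2 le_inf_iff order_refl sup_mono)
    finally show "x \<le> sup (c y) (inf y z)" .
  next
    fix x y z
    assume a: "x \<le> sup (c y) (inf y z)"
    have "sup x (c y) \<le> sup (c y) (inf y z)" using a by simp
    hence "inf (sup x (c y)) y \<le> inf y (sup (c y) (inf y z))"
      by (metis inf_commute inf_mono order_refl)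
    also have "\<dots> = inf y (sup (inf y z) (c y))" by (simp add: sup_commute)
    also have "\<dots> = inf y z" using i2[of y z] by simp
    finally show "inf (sup x (c y)) y \<le> z" by simp
  qed
qed

end
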